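(* Let $n\ge 2$, $\sigma,\tau\in S_n$ and $x\in\{0,1,\ldots,n-2\}$. If $x\notin\{\sigma(n-1),\ \tau^{-1}\sigma(n-1)\}$, then $(\sigma^{\sf CT})^{-1}\tau^{\sf CT}(x)=\sigma^{-1}\tau(x)$.
   Context: $S_n$ is the symmetric group on $\{0,1,\ldots,n-1\}$, with composition from left to right: $\tau\sigma(x):=\sigma(\tau(x))$; thus $\sigma^{-1}\tau(x)=\tau(\sigma^{-1}(x))$ and $\tau^{-1}\sigma(n-1)=\sigma(\tau^{-1}(n-1))$. The contraction of $\sigma\in S_n$ is $\sigma^{\sf CT}\in S_{n-1}$ (on $\{0,\ldots,n-2\}$) defined by $\sigma^{\sf CT}(x)=\sigma(n-1)$ if $x=\sigma^{-1}(n-1)$ and $\sigma^{\sf CT}(x)=\sigma(x)$ otherwise (i.e. delete $n-1$ from the cycle notation of $\sigma$). *)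

theory Defs
  imports "HOL-Combinatorics.Permutations"
begin

text \<open>Permutations of {0,...,n-1} are functions nat => nat with sigma permutes {..<n}
  (identity outside). Contraction: delete n-1 from the cycle notation; the result
  permutes {..<n-1} (identity on all x >= n-1).\<close>

definition contraction :: "nat \<Rightarrow> (nat \<Rightarrow> nat) \<Rightarrow> (nat \<Rightarrow> nat)" where
  "contraction n \<sigma> = (\<lambda>x. if n - 1 \<le> x then x
                          else if x = inv \<sigma> (n - 1) then \<sigma> (n - 1)
                          else \<sigma> x)"

end

theory Submission
  imports Defs
begin

lemma ct_range:
  assumes "\<sigma> permutes {..<n}" "n \<ge> 2" "a < n - 1"
  shows "contraction n \<sigma> a < n - 1"
proof -
  have i1: "\<sigma> (inv \<sigma> y) = y" "inv \<sigma> (\<sigma> y) = y" for y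
    using assms(1) permutes_inverses by fastforce+
  have lt: "\<sigma> y < n" if "y < n" for y
    using assms(1) that permutes_in_image by fastforce
  show ?thesis
  proof (cases "a = inv \<sigma> (n - 1)")
    case True
    have "\<sigma> (n-1) \<noteq> n - 1"
    proof
      assume "\<sigma> (n-1) = n - 1"
      hence "inv \<sigma> (n-1) = n - 1" using i1 by metis
      thus False using True assms(3) by simp
    qed
    with lt[of "n-1"] assms True show ?thesis by (simp add: contraction_def)
  next
    case False
    hence "\<sigma> a \<noteq> n - 1" using i1 by metis
    moreover have "\<sigma> a < n" using lt[of a] assms(3) by linarith
    ultimately show ?thesis using assms False by (simp add: contraction_def)
  qed
qed

lemma ct_inj:
  assumes "\<sigma> permutes {..<n}" "n \<ge> 2"
  shows "inj (contraction n \<sigma>)"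
proof (rule injI)
  fix a b assume eq: "contraction n \<sigma> a = contraction n \<sigma> b"
  have i1: "\<sigma> (inv \<sigma> y) = y" "inv \<sigma> (\<sigma> y) = y" for y
    using assms(1) permutes_inverses by fastforce+
  show "a = b"
  proof (cases "a < n - 1")
    case a: True
    show ?thesis
    proof (cases "b < n - 1")
      case b: True
      have "inj \<sigma>" using assms(1) permutes_inj by blast
      show ?thesis using eq a b i1 \<open>inj \<sigma>\<close> unfolding contraction_def
        by (auto split: if_splits simp: inj_eq)
    next
      case False
      thus ?thesis using eq ct_range[OF assms a] by (simp add: contraction_def)
    qed
  next
    case a: False
    show ?thesis
    proof (cases "b < n - 1")
      case b: True
      thus ?thesis using eq a ct_range[OF assms b] by (simp add: contraction_def)
    next
      case False
      thus ?thesis using eq a by (simp add: contraction_def)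
    qed
  qed
qed

theorem lemma4p3:
  fixes n :: nat and \<sigma> \<tau> :: "nat \<Rightarrow> nat" and x :: nat
  assumes "n \<ge> 2"
    and "\<sigma> permutes {..<n}" and "\<tau> permutes {..<n}"
    and "x \<le> n - 2"
    and "x \<notin> {\<sigma> (n - 1), \<sigma> (inv \<tau> (n - 1))}"
  shows "contraction n \<tau> (inv (contraction n \<sigma>) x) = \<tau> (inv \<sigma> x)"
proof -
  have i1: "\<sigma> (inv \<sigma> y) = y" "inv \<sigma> (\<sigma> y) = y" for y
    using assms(2) permutes_inverses by fastforce+
  define y where "y = inv \<sigma> x"
  have xy: "\<sigma> y = x" using i1 y_def by simp
  have xn: "x < n" using assms by linarith
  have "y \<in> {..<n}"
    using assms(2) xn y_def by (metis lessThan_iff permutes_inv permutes_in_image)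
  moreover have "y \<noteq> n - 1" using xy assms(5) by auto
  ultimately have yl: "y < n - 1" by auto
  have "y \<noteq> inv \<sigma> (n - 1)" 
  proof
    assume "y = inv \<sigma> (n - 1)"
    hence "x = n - 1" using xy i1 by metis
    thus False using assms(1,4) by linarith
  qed
  hence c1: "contraction n \<sigma> y = x" using yl xy by (simp add: contraction_def)
  have "inv (contraction n \<sigma>) x = y"
    using c1 inv_f_f[OF ct_inj[OF assms(2,1)]] by metis
  moreover have "y \<noteq> inv \<tau> (n - 1)" using xy assms(5) by auto
  ultimately show ?thesis using yl y_def by (simp add: contraction_def)
qed

end
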